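(* Let $\Omega$ be a topological Hausdorff space, $\mathcal{FV}(\Omega)$ a dom-space and $T\colon\mathcal{FV}(\Omega)\to\mathcal{C}(\Omega)$ linear. Then the map $\delta\circ T\colon\Omega\to\mathcal{FV}(\Omega)'_\gamma$, $x\mapsto\delta_x\circ T$, is well-defined and continuous in each of the following cases: (i) $\Omega$ is a $k_{\mathbb{R}}$-space and $T\colon\mathcal{FV}(\Omega)\to\mathcal{CW}(\Omega)$ is continuous; (ii) $T$ maps into $\mathcal{C}_b(\Omega)$ and $T\colon\mathcal{FV}(\Omega)\to\mathcal{C}_b(\Omega)$ is continuous.
   Context: $\mathbb{K}\in\{\mathbb{R},\mathbb{C}\}$. $\mathcal{CW}(\Omega)$: continuous $\mathbb{K}$-valued functions with the topology of uniform convergence on compact subsets; $\mathcal{C}_b(\Omega)$: bounded continuous $\mathbb{K}$-valued functions with the topology of uniform convergence on $\Omega$. A completely regular space $\Omega$ is a $k_{\mathbb{R}}$-space if every map from $\Omega$ into a completely regular space whose restriction to each compact subset is continuous is continuous. $\mathcal{FV}(\Omega)'_\gamma$: dual with the topology of uniform convergence on precompact subsets. $(\delta_x\circ T)(f):=T(f)(x)$. Framework: $J,M$ non-empty index sets, $(\omega_m)_{m\in M}$ non-empty sets, $\nu_{j,m}\colon\omega_m\to[0,\infty)$ such that for all $m$, $x\in\omega_m$ some $\nu_{j,m}(x)>0$; $\operatorname{AP}(\Omega)\subset\mathbb{K}^\Omega$ a linear subspace; $T_m\colon\operatorname{dom}T_m\to\mathbb{K}^{\omega_m}$ linear maps on linear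 subspaces of $\mathbb{K}^\Omega$; $\mathcal{FV}(\Omega):=\{f\in\operatorname{AP}(\Omega)\cap\bigcap_m\operatorname{dom}T_m: |f|_{j,m}:=\sup_{x\in\omega_m}|T_m(f)(x)|\nu_{j,m}(x)<\infty\ \forall j,m\}$ with these seminorms. It is a dom-space if it is Hausdorff, the seminorms are directed and every $\delta_x\colon f\mapsto f(x)$ belongs to $\mathcal{FV}(\Omega)'$. *)

theory Defs
  imports "HOL-Analysis.Analysis"
begin

text \<open>Functions on Omega are modelled as functions of type 'a to 'k; only their
values on the carrier of the topology matter for the statement.\<close>

definition lin_subspace :: "('a \<Rightarrow> 'k::real_normed_field) set \<Rightarrow> bool" where
  "lin_subspace S \<longleftrightarrow> (\<lambda>x. 0) \<in> S \<and>
     (\<forall>f\<in>S. \<forall>g\<in>S. (\<lambda>x. f x + g x) \<in> S) \<and> (\<forall>c. \<forall>f\<in>S. (\<lambda>x. c * f x) \<in> S)"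

definition lin_map_on :: "('a \<Rightarrow> 'k::real_normed_field) set \<Rightarrow> (('a \<Rightarrow> 'k) \<Rightarrow> ('b \<Rightarrow> 'k)) \<Rightarrow> bool" where
  "lin_map_on D T \<longleftrightarrow> (\<forall>f\<in>D. \<forall>g\<in>D. T (\<lambda>x. f x + g x) = (\<lambda>y. T f y + T g y)) \<and>
     (\<forall>c. \<forall>f\<in>D. T (\<lambda>x. c * f x) = (\<lambda>y. c * T f y))"

definition lin_map_into_on :: "('a \<Rightarrow> 'k::real_normed_field) set \<Rightarrow> 'b set \<Rightarrow> (('a \<Rightarrow> 'k) \<Rightarrow> ('b \<Rightarrow> 'k)) \<Rightarrow> bool" where
  "lin_map_into_on D S T \<longleftrightarrow> (\<forall>f\<in>D. \<forall>g\<in>D. \<forall>y\<in>S. T (\<lambda>x. f x + g x) y = T f y + T g y) \<and>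
     (\<forall>c. \<forall>f\<in>D. \<forall>y\<in>S. T (\<lambda>x. c * f x) y = c * T f y)"

definition lin_functional_on :: "('a \<Rightarrow> 'k::real_normed_field) set \<Rightarrow> (('a \<Rightarrow> 'k) \<Rightarrow> 'k) \<Rightarrow> bool" where
  "lin_functional_on D \<phi> \<longleftrightarrow> (\<forall>f\<in>D. \<forall>g\<in>D. \<phi> (\<lambda>x. f x + g x) = \<phi> f + \<phi> g) \<and>
     (\<forall>c. \<forall>f\<in>D. \<phi> (\<lambda>x. c * f x) = c * \<phi> f)"

definition fv_seminorm ::
  "('m \<Rightarrow> ('a \<Rightarrow> 'k::real_normed_field) \<Rightarrow> ('w \<Rightarrow> 'k)) \<Rightarrow> ('m \<Rightarrow> 'w set) \<Rightarrow> ('j \<Rightarrow> 'm \<Rightarrow> 'w \<Rightarrow> real)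
    \<Rightarrow> 'j \<Rightarrow> 'm \<Rightarrow> ('a \<Rightarrow> 'k) \<Rightarrow> real" where
  "fv_seminorm Tm \<omega> \<nu> j m f = (SUP x\<in>\<omega> m. norm (Tm m f x) * \<nu> j m x)"

definition FV_space ::
  "('a \<Rightarrow> 'k::real_normed_field) set \<Rightarrow> ('m \<Rightarrow> ('a \<Rightarrow> 'k) set) \<Rightarrow> ('m \<Rightarrow> ('a \<Rightarrow> 'k) \<Rightarrow> ('w \<Rightarrow> 'k))
    \<Rightarrow> ('m \<Rightarrow> 'w set) \<Rightarrow> ('j \<Rightarrow> 'm \<Rightarrow> 'w \<Rightarrow> real) \<Rightarrow> ('a \<Rightarrow> 'k) set" where
  "FV_space AP domT Tm \<omega> \<nu> = {f \<in> AP. (\<forall>m. f \<in> domT m) \<and>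
       (\<forall>j m. bdd_above ((\<lambda>x. norm (Tm m f x) * \<nu> j m x) ` \<omega> m))}"

definition FV_topology ::
  "('a \<Rightarrow> 'k::real_normed_field) set \<Rightarrow> ('m \<Rightarrow> ('a \<Rightarrow> 'k) set) \<Rightarrow> ('m \<Rightarrow> ('a \<Rightarrow> 'k) \<Rightarrow> ('w \<Rightarrow> 'k))
    \<Rightarrow> ('m \<Rightarrow> 'w set) \<Rightarrow> ('j \<Rightarrow> 'm \<Rightarrow> 'w \<Rightarrow> real) \<Rightarrow> ('a \<Rightarrow> 'k) topology" where
  "FV_topology AP domT Tm \<omega> \<nu> = topology_generated_by
     (insert (FV_space AP domT Tm \<omega> \<nu>)
       {{g \<in> FV_space AP domT Tm \<omega> \<nu>. fv_seminorm Tm \<omega> \<nu> j m (\<lambda>x. g x - f x) < \<epsilon>} | f j m \<epsilon>.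
           f \<in> FV_space AP domT Tm \<omega> \<nu> \<and> \<epsilon> > 0})"

definition FV_dual ::
  "('a \<Rightarrow> 'k::real_normed_field) set \<Rightarrow> ('m \<Rightarrow> ('a \<Rightarrow> 'k) set) \<Rightarrow> ('m \<Rightarrow> ('a \<Rightarrow> 'k) \<Rightarrow> ('w \<Rightarrow> 'k))
    \<Rightarrow> ('m \<Rightarrow> 'w set) \<Rightarrow> ('j \<Rightarrow> 'm \<Rightarrow> 'w \<Rightarrow> real) \<Rightarrow> (('a \<Rightarrow> 'k) \<Rightarrow> 'k) set" where
  "FV_dual AP domT Tm \<omega> \<nu> = {\<phi>. lin_functional_on (FV_space AP domT Tm \<omega> \<nu>) \<phi> \<and>
       continuous_map (FV_topology AP domT Tm \<omega> \<nu>) euclidean \<phi>}"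

definition FV_precompact ::
  "('a \<Rightarrow> 'k::real_normed_field) set \<Rightarrow> ('m \<Rightarrow> ('a \<Rightarrow> 'k) set) \<Rightarrow> ('m \<Rightarrow> ('a \<Rightarrow> 'k) \<Rightarrow> ('w \<Rightarrow> 'k))
    \<Rightarrow> ('m \<Rightarrow> 'w set) \<Rightarrow> ('j \<Rightarrow> 'm \<Rightarrow> 'w \<Rightarrow> real) \<Rightarrow> ('a \<Rightarrow> 'k) set \<Rightarrow> bool" where
  "FV_precompact AP domT Tm \<omega> \<nu> B \<longleftrightarrow> B \<subseteq> FV_space AP domT Tm \<omega> \<nu> \<and>
     (\<forall>U. openin (FV_topology AP domT Tm \<omega> \<nu>) U \<and> (\<lambda>x. 0) \<in> U \<longrightarrow>
        (\<exists>F. finite F \<and> F \<subseteq> FV_space AP domT Tm \<omega> \<nu> \<and>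
             B \<subseteq> {(\<lambda>x. g x + u x) | g u. g \<in> F \<and> u \<in> U}))"

definition FV_dual_gamma ::
  "('a \<Rightarrow> 'k::real_normed_field) set \<Rightarrow> ('m \<Rightarrow> ('a \<Rightarrow> 'k) set) \<Rightarrow> ('m \<Rightarrow> ('a \<Rightarrow> 'k) \<Rightarrow> ('w \<Rightarrow> 'k))
    \<Rightarrow> ('m \<Rightarrow> 'w set) \<Rightarrow> ('j \<Rightarrow> 'm \<Rightarrow> 'w \<Rightarrow> real) \<Rightarrow> (('a \<Rightarrow> 'k) \<Rightarrow> 'k) topology" where
  "FV_dual_gamma AP domT Tm \<omega> \<nu> = topology_generated_by
     (insert (FV_dual AP domT Tm \<omega> \<nu>)
       {{\<psi> \<in> FV_dual AP domT Tm \<omega> \<nu>. (SUP f\<in>B. norm (\<psi> f - \<phi> f)) < \<epsilon>} | \<phi> B \<epsilon>.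
           \<phi> \<in> FV_dual AP domT Tm \<omega> \<nu> \<and> FV_precompact AP domT Tm \<omega> \<nu> B \<and> \<epsilon> > 0})"

definition dom_space ::
  "'a topology \<Rightarrow> ('a \<Rightarrow> 'k::real_normed_field) set \<Rightarrow> ('m \<Rightarrow> ('a \<Rightarrow> 'k) set) \<Rightarrow> ('m \<Rightarrow> ('a \<Rightarrow> 'k) \<Rightarrow> ('w \<Rightarrow> 'k))
    \<Rightarrow> ('m \<Rightarrow> 'w set) \<Rightarrow> ('j \<Rightarrow> 'm \<Rightarrow> 'w \<Rightarrow> real) \<Rightarrow> bool" where
  "dom_space X AP domT Tm \<omega> \<nu> \<longleftrightarrow>
     Hausdorff_space (FV_topology AP domT Tm \<omega> \<nu>) \<and>
     (\<forall>j1 m1 j2 m2. \<exists>j m C. \<forall>f\<in>FV_space AP domT Tm \<omega> \<nu>.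
        max (fv_seminorm Tm \<omega> \<nu> j1 m1 f) (fv_seminorm Tm \<omega> \<nu> j2 m2 f) \<le> C * fv_seminorm Tm \<omega> \<nu> j m f) \<and>
     (\<forall>x\<in>topspace X. (\<lambda>f. f x) \<in> FV_dual AP domT Tm \<omega> \<nu>)"

definition FV_framework ::
  "('a \<Rightarrow> 'k::real_normed_field) set \<Rightarrow> ('m \<Rightarrow> ('a \<Rightarrow> 'k) set) \<Rightarrow> ('m \<Rightarrow> ('a \<Rightarrow> 'k) \<Rightarrow> ('w \<Rightarrow> 'k))
    \<Rightarrow> ('m \<Rightarrow> 'w set) \<Rightarrow> ('j \<Rightarrow> 'm \<Rightarrow> 'w \<Rightarrow> real) \<Rightarrow> bool" where
  "FV_framework AP domT Tm \<omega> \<nu> \<longleftrightarrow>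
     (\<forall>m. \<omega> m \<noteq> {}) \<and> (\<forall>j m x. \<nu> j m x \<ge> 0) \<and>
     (\<forall>m. \<forall>x\<in>\<omega> m. \<exists>j. \<nu> j m x > 0) \<and>
     lin_subspace AP \<and> (\<forall>m. lin_subspace (domT m)) \<and> (\<forall>m. lin_map_on (domT m) (Tm m))"

definition C_space :: "'a topology \<Rightarrow> ('a \<Rightarrow> 'k::real_normed_field) set" where
  "C_space X = {g. continuous_map X euclidean g}"

definition CW_topology :: "'a topology \<Rightarrow> ('a \<Rightarrow> 'k::real_normed_field) topology" where
  "CW_topology X = topology_generated_by
     (insert (C_space X)
       {{h \<in> C_space X. (SUP x\<in>K. norm (h x - g x)) < \<epsilon>} | g K \<epsilon>.
          g \<in> C_space X \<and> compactin X K \<and> \<epsilon> > 0})"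

definition Cb_space :: "'a topology \<Rightarrow> ('a \<Rightarrow> 'k::real_normed_field) set" where
  "Cb_space X = {g \<in> C_space X. bounded (g ` topspace X)}"

definition Cb_topology :: "'a topology \<Rightarrow> ('a \<Rightarrow> 'k::real_normed_field) topology" where
  "Cb_topology X = topology_generated_by
     (insert (Cb_space X)
       {{h \<in> Cb_space X. (SUP x\<in>topspace X. norm (h x - g x)) < \<epsilon>} | g \<epsilon>.
          g \<in> Cb_space X \<and> \<epsilon> > 0})"

definition kR_space :: "'a topology \<Rightarrow> bool" where
  "kR_space X \<longleftrightarrow> completely_regular_space X \<and>
     (\<forall>f::'a \<Rightarrow> real. (\<forall>K. compactin X K \<longrightarrow> continuous_map (subtopology X K) euclideanreal f)
        \<longrightarrow> continuous_map X euclideanreal f)"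

end

theory Submission
  imports Defs
begin

lemma FV_zero:
  fixes AP :: "('a \<Rightarrow> 'k::real_normed_field) set"
  assumes "FV_framework AP domT Tm \<omega> \<nu>"
  shows "(\<lambda>x. 0) \<in> FV_space AP domT Tm \<omega> \<nu>"
proof -
  have ls: "lin_subspace AP" "\<And>m. lin_subspace (domT m)" "\<And>m. lin_map_on (domT m) (Tm m)"
    using assms by (auto simp: FV_framework_def)
  have "Tm m (\<lambda>x. 0) = (\<lambda>y. 0)" for m
  proof -
    have z: "(\<lambda>x. 0) \<in> domT m" using ls(2)[of m] by (simp add: lin_subspace_def)
    have "\<forall>c. \<forall>f\<in>domT m. Tm m (\<lambda>x. c * f x) = (\<lambda>y. c * Tm m f y)"
      using ls(3)[of m] unfolding lin_map_on_def by blast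
    from this[rule_format, where c=0 and f="\<lambda>x. 0"] z show ?thesis by simp
  qed
  then show ?thesis using ls by (auto simp: FV_space_def lin_subspace_def)
qed

lemma FV_topspace: "topspace (FV_topology AP domT Tm \<omega> \<nu>) = FV_space AP domT Tm \<omega> \<nu>"
  unfolding FV_topology_def topology_generated_by_topspace by auto

lemma lin_fun_zero:
  assumes "lin_functional_on D \<phi>" "(\<lambda>x. 0) \<in> D"
  shows "\<phi> (\<lambda>x. 0) = 0"
proof -
  have "\<forall>c. \<forall>f\<in>D. \<phi> (\<lambda>x. c * f x) = c * \<phi> f" using assms(1) by (simp add: lin_functional_on_def)
  from this[rule_format, where c=0 and f="\<lambda>x. 0"] assms(2) show ?thesis by simp
qed

lemma lin_into_zero:
  assumes "lin_map_into_on D S T" "(\<lambda>x. 0) \<in> D" "y \<in> S"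
  shows "T (\<lambda>x. 0) y = 0"
proof -
  have "\<forall>c. \<forall>f\<in>D. \<forall>y\<in>S. T (\<lambda>x. c * f x) y = c * T f y" using assms(1) by (simp add: lin_map_into_on_def)
  from this[rule_format, where c=0 and f="\<lambda>x. 0" and y=y] assms(2,3) show ?thesis by simp
qed

lemma precompact_bounded:
  assumes fr: "FV_framework AP domT Tm \<omega> \<nu>"
    and lin: "lin_functional_on (FV_space AP domT Tm \<omega> \<nu>) ch"
    and cont: "continuous_map (FV_topology AP domT Tm \<omega> \<nu>) euclidean ch"
    and pc: "FV_precompact AP domT Tm \<omega> \<nu> B"
  shows "\<exists>M. \<forall>f\<in>B. norm (ch f) \<le> M"
proof -
  let ?S = "FV_space AP domT Tm \<omega> \<nu>"
  let ?U = "{f \<in> topspace (FV_topology AP domT Tm \<omega> \<nu>). ch f \<in> ball 0 1}"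
  have op: "openin (FV_topology AP domT Tm \<omega> \<nu>) ?U"
    by (rule openin_continuous_map_preimage[OF cont]) auto
  have z: "(\<lambda>x. 0) \<in> ?S" by (rule FV_zero[OF fr])
  have "ch (\<lambda>x. 0) = 0" by (rule lin_fun_zero[OF lin z])
  then have "(\<lambda>x. 0) \<in> ?U" using z by (simp add: FV_topspace)
  then obtain F where F: "finite F" "F \<subseteq> ?S" "B \<subseteq> {(\<lambda>x. g x + u x) | g u. g \<in> F \<and> u \<in> ?U}"
    using pc op unfolding FV_precompact_def by blast
  have "norm (ch f) \<le> (\<Sum>g\<in>F. norm (ch g)) + 1" if fB: "f \<in> B" for f
  proof -
    obtain g u where gu: "f = (\<lambda>x. g x + u x)" "g \<in> F" "u \<in> ?U" using F(3) fB by blast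
    have gS: "g \<in> ?S" using gu F by auto
    have uS: "u \<in> ?S" using gu by (simp add: FV_topspace)
    have "ch f = ch g + ch u" using lin gS uS gu(1) unfolding lin_functional_on_def by blast
    then have "norm (ch f) \<le> norm (ch g) + norm (ch u)" by (simp add: norm_triangle_ineq)
    also have "\<dots> \<le> (\<Sum>g\<in>F. norm (ch g)) + 1"
      using gu(3) member_le_sum[of g F "\<lambda>g. norm (ch g)"] gu(2) F(1) by (auto simp: dist_norm)
    finally show ?thesis .
  qed
  then show ?thesis by blast
qed

lemma sup_close:
  fixes a b :: "'b \<Rightarrow> real"
  assumes "B \<noteq> {}" "bdd_above (a ` B)" "bdd_above (b ` B)" "\<And>f. f \<in> B \<Longrightarrow> \<bar>a f - b f\<bar> \<le> e"
  shows "\<bar>(SUP f\<in>B. a f) - (SUP f\<in>B. b f)\<bar> \<le> e"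
proof -
  have 1: "(SUP f\<in>B. a f) \<le> (SUP f\<in>B. b f) + e"
  proof (rule cSUP_least[OF assms(1)])
    fix f assume f: "f \<in> B"
    have "b f \<le> (SUP f\<in>B. b f)" by (rule cSUP_upper[OF f assms(3)])
    then show "a f \<le> (SUP f\<in>B. b f) + e" using assms(4)[OF f] by linarith
  qed
  have 2: "(SUP f\<in>B. b f) \<le> (SUP f\<in>B. a f) + e"
  proof (rule cSUP_least[OF assms(1)])
    fix f assume f: "f \<in> B"
    have "a f \<le> (SUP f\<in>B. a f)" by (rule cSUP_upper[OF f assms(2)])
    then show "b f \<le> (SUP f\<in>B. a f) + e" using assms(4)[OF f] by linarith
  qed
  from 1 2 show ?thesis by linarith
qed


lemma cont_real_metric:
  "continuous_map Y euclideanreal h \<longleftrightarrow>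
   (\<forall>x\<in>topspace Y. \<forall>e>0. \<exists>U. openin Y U \<and> x \<in> U \<and> (\<forall>y\<in>U. \<bar>h y - h x\<bar> < e))"
  by (simp add: Met_TC.continuous_map_to_metric dist_real_def abs_minus_commute
      flip: mtopology_is_euclidean)

lemma cont_norm_metric:
  fixes h :: "'a \<Rightarrow> 'k::real_normed_vector"
  shows "continuous_map Y euclidean h \<Longrightarrow> x \<in> topspace Y \<Longrightarrow> e > 0 \<Longrightarrow>
   \<exists>U. openin Y U \<and> x \<in> U \<and> (\<forall>y\<in>U. norm (h y - h x) < e)"
  apply (simp add: Met_TC.continuous_map_to_metric dist_norm
      flip: mtopology_is_euclidean)
  by (metis norm_minus_commute)

lemma key_cont:
  fixes T :: "('a \<Rightarrow> 'k::real_normed_field) \<Rightarrow> ('a \<Rightarrow> 'k)"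
  assumes fr: "FV_framework AP domT Tm \<omega> \<nu>"
    and lin: "lin_map_into_on (FV_space AP domT Tm \<omega> \<nu>) (topspace X) T"
    and C: "\<And>f. f \<in> FV_space AP domT Tm \<omega> \<nu> \<Longrightarrow> continuous_map Y euclidean (T f)"
    and Ysub: "topspace Y \<subseteq> topspace X"
    and Uprop: "\<And>\<eta>. \<eta> > 0 \<Longrightarrow> \<exists>U. openin (FV_topology AP domT Tm \<omega> \<nu>) U \<and> (\<lambda>x. 0) \<in> U \<and>
                   (\<forall>u\<in>U. \<forall>y\<in>topspace Y. norm (T u y) < \<eta>)"
    and pc: "FV_precompact AP domT Tm \<omega> \<nu> B"
    and bdd: "\<And>x. x \<in> topspace Y \<Longrightarrow> bdd_above ((\<lambda>f. norm (T f x - \<phi> f)) ` B)"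
  shows "continuous_map Y euclideanreal (\<lambda>x. SUP f\<in>B. norm (T f x - \<phi> f))"
proof (cases "B = {}")
  case True
  then show ?thesis by simp
next
  case Bne: False
  let ?S = "FV_space AP domT Tm \<omega> \<nu>"
  show ?thesis
    unfolding cont_real_metric
  proof (intro ballI allI impI)
    fix x0 e assume x0: "x0 \<in> topspace Y" and e: "(e::real) > 0"
    obtain U where U: "openin (FV_topology AP domT Tm \<omega> \<nu>) U" "(\<lambda>x. 0) \<in> U"
      "\<forall>u\<in>U. \<forall>y\<in>topspace Y. norm (T u y) < e/4"
      using Uprop[of "e/4"] e by auto
    obtain F where F: "finite F" "F \<subseteq> ?S" "B \<subseteq> {(\<lambda>x. g x + u x) | g u. g \<in> F \<and> u \<in> U}"
      using pc U unfolding FV_precompact_def by blast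
    have "\<forall>g\<in>F. \<exists>V. openin Y V \<and> x0 \<in> V \<and> (\<forall>y\<in>V. norm (T g y - T g x0) < e/4)"
    proof
      fix g assume "g \<in> F"
      then have "g \<in> ?S" using F(2) by auto
      then show "\<exists>V. openin Y V \<and> x0 \<in> V \<and> (\<forall>y\<in>V. norm (T g y - T g x0) < e/4)"
        using cont_norm_metric[OF C x0, of g "e/4"] e by auto
    qed
    from bchoice[OF this] obtain V where V0: "\<forall>g\<in>F. openin Y (V g) \<and> x0 \<in> V g \<and> (\<forall>y\<in>V g. norm (T g y - T g x0) < e/4)"
      by blast
    have V: "\<And>g. g \<in> F \<Longrightarrow> openin Y (V g) \<and> x0 \<in> V g \<and> (\<forall>y\<in>V g. norm (T g y - T g x0) < e/4)"
      using V0 by blast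
    define W where "W = (\<Inter>g\<in>F. V g) \<inter> topspace Y"
    have Wo: "openin Y W" unfolding W_def by (rule openin_INT[OF F(1)]) (use V in blast)
    have x0W: "x0 \<in> W" unfolding W_def using V x0 by auto
    have "\<bar>(SUP f\<in>B. norm (T f y - \<phi> f)) - (SUP f\<in>B. norm (T f x0 - \<phi> f))\<bar> < e" if yW: "y \<in> W" for y
    proof -
      have yY: "y \<in> topspace Y" using yW W_def by auto
      have "\<bar>(SUP f\<in>B. norm (T f y - \<phi> f)) - (SUP f\<in>B. norm (T f x0 - \<phi> f))\<bar> \<le> 3*e/4"
      proof (rule sup_close[OF Bne bdd[OF yY] bdd[OF x0]])
        fix f assume fB: "f \<in> B"
        obtain g u where gu: "f = (\<lambda>x. g x + u x)" "g \<in> F" "u \<in> U" using F(3) fB by blast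
        have gS: "g \<in> ?S" using gu F by auto
        have uS: "u \<in> ?S" using gu(3) openin_subset[OF U(1)] unfolding FV_topspace by auto
        have sy: "T f y = T g y + T u y" and sx: "T f x0 = T g x0 + T u x0"
          proof -
          have A: "\<forall>f\<in>?S. \<forall>g\<in>?S. \<forall>y\<in>topspace X. T (\<lambda>x. f x + g x) y = T f y + T g y"
            using lin unfolding lin_map_into_on_def by blast
          show "T f y = T g y + T u y" using A gS uS yY Ysub gu(1) by auto
          show "T f x0 = T g x0 + T u x0" using A gS uS x0 Ysub gu(1) by auto
        qed
        have n1: "norm (T g y - T g x0) < e/4" using V[OF gu(2)] yW W_def gu(2) by auto
        have n2: "norm (T u y) < e/4" "norm (T u x0) < e/4" using U(3) gu(3) yY x0 by auto
        have "T f y - T f x0 = (T g y - T g x0) + (T u y - T u x0)" using sy sx by simp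
        moreover have "norm ((T g y - T g x0) + (T u y - T u x0)) \<le> norm (T g y - T g x0) + norm (T u y - T u x0)"
          by (rule norm_triangle_ineq)
        moreover have "norm (T u y - T u x0) \<le> norm (T u y) + norm (T u x0)"
          by (rule norm_triangle_ineq4)
        ultimately have "norm (T f y - T f x0) \<le> norm (T g y - T g x0) + norm (T u y) + norm (T u x0)"
          by simp
        then have nf: "norm (T f y - T f x0) \<le> 3*e/4" using n1 n2 by linarith
        have "\<bar>norm (T f y - \<phi> f) - norm (T f x0 - \<phi> f)\<bar> \<le> norm ((T f y - \<phi> f) - (T f x0 - \<phi> f))"
          by (rule norm_triangle_ineq3)
        also have "\<dots> = norm (T f y - T f x0)" by simp
        finally show "\<bar>norm (T f y - \<phi> f) - norm (T f x0 - \<phi> f)\<bar> \<le> 3*e/4" using nf by linarith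
      qed
      then show ?thesis using e by linarith
    qed
    then show "\<exists>U. openin Y U \<and> x0 \<in> U \<and> (\<forall>y\<in>U. \<bar>(SUP f\<in>B. norm (T f y - \<phi> f)) - (SUP f\<in>B. norm (T f x0 - \<phi> f))\<bar> < e)"
      using Wo x0W by blast
  qed
qed


lemma cont_metric_iff:
  fixes h :: "'a \<Rightarrow> 'k::real_normed_vector"
  shows "continuous_map Y euclidean h \<longleftrightarrow> (\<forall>x\<in>topspace Y. \<forall>e>0.
   \<exists>U. openin Y U \<and> x \<in> U \<and> (\<forall>y\<in>U. norm (h y - h x) < e))"
  apply (simp add: Met_TC.continuous_map_to_metric dist_norm
      flip: mtopology_is_euclidean)
  by (metis norm_minus_commute)

lemma CW_topspace: "topspace (CW_topology X) = C_space X"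
  unfolding CW_topology_def topology_generated_by_topspace by auto

lemma Cb_topspace: "topspace (Cb_topology X) = Cb_space X"
  unfolding Cb_topology_def topology_generated_by_topspace by auto

lemma bdd_of_bounded:
  fixes g :: "'a \<Rightarrow> 'k::real_normed_vector"
  assumes "bounded (g ` S)" "bounded (h ` S)"
  shows "bdd_above ((\<lambda>y. norm (g y - h y)) ` S)"
proof -
  obtain a where a: "\<forall>y\<in>S. norm (g y) \<le> a" using assms(1) by (auto simp: bounded_iff)
  obtain b where b: "\<forall>y\<in>S. norm (h y) \<le> b" using assms(2) by (auto simp: bounded_iff)
  have "norm (g y - h y) \<le> a + b" if "y \<in> S" for y
    using norm_triangle_ineq4[of "g y" "h y"] a b that by fastforce
  then show ?thesis by (intro bdd_aboveI2) blast
qed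

lemma eval_CW:
  assumes x: "x \<in> topspace X"
  shows "continuous_map (CW_topology X) (euclidean::'k::real_normed_field topology) (\<lambda>h. h x)"
  unfolding cont_metric_iff
proof (intro ballI allI impI)
  fix h0 :: "'a \<Rightarrow> 'k" and e :: real assume h0: "h0 \<in> topspace (CW_topology X)" and e: "e > 0"
  have h0C: "h0 \<in> C_space X" using h0 CW_topspace by blast
  let ?U = "{h \<in> C_space X. (SUP y\<in>{x}. norm (h y - h0 y)) < e}"
  have "openin (CW_topology X) ?U"
    unfolding CW_topology_def
    apply (rule topology_generated_by_Basis, rule insertI2, rule CollectI)
    apply (rule exI[of _ h0], rule exI[of _ "{x}"], rule exI[of _ e])
    using h0C x e by simp
  moreover have "h0 \<in> ?U" using h0C e by simp
  moreover have "\<forall>h\<in>?U. norm (h x - h0 x) < e" by simp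
  ultimately show "\<exists>U. openin (CW_topology X) U \<and> h0 \<in> U \<and> (\<forall>h\<in>U. norm (h x - h0 x) < e)"
    by blast
qed

lemma eval_Cb:
  assumes x: "x \<in> topspace X"
  shows "continuous_map (Cb_topology X) (euclidean::'k::real_normed_field topology) (\<lambda>h. h x)"
  unfolding cont_metric_iff
proof (intro ballI allI impI)
  fix h0 :: "'a \<Rightarrow> 'k" and e :: real assume h0: "h0 \<in> topspace (Cb_topology X)" and e: "e > 0"
  have h0C: "h0 \<in> Cb_space X" using h0 Cb_topspace by blast
  let ?U = "{h \<in> Cb_space X. (SUP y\<in>topspace X. norm (h y - h0 y)) < e}"
  have "openin (Cb_topology X) ?U"
    unfolding Cb_topology_def
    apply (rule topology_generated_by_Basis, rule insertI2, rule CollectI)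
    apply (rule exI[of _ h0], rule exI[of _ e])
    using h0C e by simp
  moreover have "h0 \<in> ?U"
  proof -
    have "topspace X \<noteq> {}" using x by auto
    then have "(SUP y\<in>topspace X. norm (h0 y - h0 y)) = 0" by (simp add: cSUP_const)
    then show ?thesis using h0C e by simp
  qed
  moreover have "\<forall>h\<in>?U. norm (h x - h0 x) < e"
  proof
    fix h assume hU: "h \<in> ?U"
    have "bdd_above ((\<lambda>y. norm (h y - h0 y)) ` topspace X)"
      using hU h0C by (intro bdd_of_bounded) (auto simp: Cb_space_def)
    then have "norm (h x - h0 x) \<le> (SUP y\<in>topspace X. norm (h y - h0 y))"
      using x by (rule cSUP_upper2) simp
    then show "norm (h x - h0 x) < e" using hU by simp
  qed
  ultimately show "\<exists>U. openin (Cb_topology X) U \<and> h0 \<in> U \<and> (\<forall>h\<in>U. norm (h x - h0 x) < e)"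
    by blast
qed


lemma dual_diff:
  assumes "\<psi> \<in> FV_dual AP domT Tm \<omega> \<nu>" "\<phi> \<in> FV_dual AP domT Tm \<omega> \<nu>"
  shows "lin_functional_on (FV_space AP domT Tm \<omega> \<nu>) (\<lambda>f. \<psi> f - \<phi> f)"
    "continuous_map (FV_topology AP domT Tm \<omega> \<nu>) euclidean (\<lambda>f. \<psi> f - \<phi> f)"
  using assms unfolding FV_dual_def lin_functional_on_def
  by (auto simp: right_diff_distrib intro: continuous_map_diff)

theorem lemma4p2:
  fixes X :: "'a topology"
    and AP :: "('a \<Rightarrow> 'k::real_normed_field) set"
    and domT :: "'m \<Rightarrow> ('a \<Rightarrow> 'k) set"
    and Tm :: "'m \<Rightarrow> ('a \<Rightarrow> 'k) \<Rightarrow> ('w \<Rightarrow> 'k)"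
    and \<omega> :: "'m \<Rightarrow> 'w set"
    and \<nu> :: "'j \<Rightarrow> 'm \<Rightarrow> 'w \<Rightarrow> real"
    and T :: "('a \<Rightarrow> 'k) \<Rightarrow> ('a \<Rightarrow> 'k)"
  assumes "Hausdorff_space X"
    and "FV_framework AP domT Tm \<omega> \<nu>"
    and "dom_space X AP domT Tm \<omega> \<nu>"
    and "lin_map_into_on (FV_space AP domT Tm \<omega> \<nu>) (topspace X) T"
    and "\<forall>f\<in>FV_space AP domT Tm \<omega> \<nu>. T f \<in> C_space X"
    and "(kR_space X \<and> continuous_map (FV_topology AP domT Tm \<omega> \<nu>) (CW_topology X) T)
       \<or> ((\<forall>f\<in>FV_space AP domT Tm \<omega> \<nu>. T f \<in> Cb_space X) \<and>
          continuous_map (FV_topology AP domT Tm \<omega> \<nu>) (Cb_topology X) T)"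
  shows "(\<forall>x\<in>topspace X. (\<lambda>f. T f x) \<in> FV_dual AP domT Tm \<omega> \<nu>) \<and>
         continuous_map X (FV_dual_gamma AP domT Tm \<omega> \<nu>) (\<lambda>x f. T f x)"
proof -
  note fr = assms(2) and lin = assms(4) and TC = assms(5) and cases = assms(6)
  let ?S = "FV_space AP domT Tm \<omega> \<nu>"
  let ?FT = "FV_topology AP domT Tm \<omega> \<nu>"
  let ?D = "FV_dual AP domT Tm \<omega> \<nu>"
  have z: "(\<lambda>x. 0) \<in> ?S" by (rule FV_zero[OF fr])
  have Tcont: "continuous_map X euclidean (T f)" if "f \<in> ?S" for f
    using TC that by (auto simp: C_space_def)
  have P1: "(\<lambda>f. T f x) \<in> ?D" if x: "x \<in> topspace X" for x
  proof -
    have "lin_functional_on ?S (\<lambda>f. T f x)"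
      using lin x unfolding lin_map_into_on_def lin_functional_on_def by blast
    moreover have "continuous_map ?FT euclidean (\<lambda>f. T f x)"
      using cases
    proof
      assume "kR_space X \<and> continuous_map ?FT (CW_topology X) T"
      then have "continuous_map ?FT euclidean ((\<lambda>h. h x) \<circ> T)"
        using continuous_map_compose eval_CW[OF x] by blast
      then show ?thesis by (simp add: o_def)
    next
      assume "(\<forall>f\<in>?S. T f \<in> Cb_space X) \<and> continuous_map ?FT (Cb_topology X) T"
      then have "continuous_map ?FT euclidean ((\<lambda>h. h x) \<circ> T)"
        using continuous_map_compose eval_Cb[OF x] by blast
      then show ?thesis by (simp add: o_def)
    qed
    ultimately show ?thesis unfolding FV_dual_def by blast
  qed
  have bddB: "bdd_above ((\<lambda>f. norm (T f x - \<phi> f)) ` B)"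
    if x: "x \<in> topspace X" and \<phi>: "\<phi> \<in> ?D" and pc: "FV_precompact AP domT Tm \<omega> \<nu> B" for x \<phi> B
  proof -
    obtain M where "\<forall>f\<in>B. norm (T f x - \<phi> f) \<le> M"
      using precompact_bounded[OF fr dual_diff[OF P1[OF x] \<phi>] pc] by blast
    then show ?thesis by (intro bdd_aboveI2) blast
  qed
  have hcont: "continuous_map X euclideanreal (\<lambda>x. SUP f\<in>B. norm (T f x - \<phi> f))"
    if \<phi>: "\<phi> \<in> ?D" and pc: "FV_precompact AP domT Tm \<omega> \<nu> B" for \<phi> B
    using cases
  proof
    assume A: "kR_space X \<and> continuous_map ?FT (CW_topology X) T"
    have "continuous_map (subtopology X K) euclideanreal (\<lambda>x. SUP f\<in>B. norm (T f x - \<phi> f))"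
      if K: "compactin X K" for K
    proof -
      have KX: "K \<subseteq> topspace X" using K compactin_subset_topspace by blast
      have tK: "topspace (subtopology X K) = K" using KX by auto
      show ?thesis
      proof (rule key_cont[OF fr lin _ _ _ pc])
        fix f assume "f \<in> ?S"
        then show "continuous_map (subtopology X K) euclidean (T f)"
          using Tcont continuous_map_from_subtopology by blast
      next
        show "topspace (subtopology X K) \<subseteq> topspace X" using KX tK by simp
      next
        fix x assume "x \<in> topspace (subtopology X K)"
        then show "bdd_above ((\<lambda>f. norm (T f x - \<phi> f)) ` B)"
          using bddB[OF _ \<phi> pc] KX tK by auto
      next
        fix \<eta> :: real assume \<eta>: "\<eta> > 0"
        show "\<exists>U. openin ?FT U \<and> (\<lambda>x. 0) \<in> U \<and> (\<forall>u\<in>U. \<forall>y\<in>topspace (subtopology X K). norm (T u y) < \<eta>)"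
        proof (cases "K = {}")
          case True
          then show ?thesis using z tK by (intro exI[of _ ?S]) (auto simp flip: FV_topspace)
        next
          case Kne: False
          let ?B0 = "{h \<in> C_space X. (SUP y\<in>K. norm ((h::'a \<Rightarrow> 'k) y - 0)) < \<eta>/2}"
          have zC: "(\<lambda>x. 0::'k) \<in> C_space X" by (simp add: C_space_def)
          have B0o: "openin (CW_topology X) ?B0"
            unfolding CW_topology_def
            apply (rule topology_generated_by_Basis, rule insertI2, rule CollectI)
            apply (rule exI[of _ "\<lambda>x. 0"], rule exI[of _ K], rule exI[of _ "\<eta>/2"])
            using zC K \<eta> by simp
          let ?U = "{f \<in> topspace ?FT. T f \<in> ?B0}"
          have Uo: "openin ?FT ?U" using openin_continuous_map_preimage A B0o by blast
          have "(SUP y\<in>K. norm (T (\<lambda>x. 0) y - 0)) = (SUP y\<in>K. (0::real))"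
            using lin_into_zero[OF lin z] KX by (intro SUP_cong) auto
          then have "(SUP y\<in>K. norm (T (\<lambda>x. 0) y - 0)) = 0" using Kne by (simp add: cSUP_const)
          then have zU: "(\<lambda>x. 0) \<in> ?U" using z TC \<eta> by (simp add: FV_topspace)
          have "\<forall>u\<in>?U. \<forall>y\<in>K. norm (T u y) < \<eta>"
          proof (intro ballI)
            fix u y assume uU: "u \<in> ?U" and y: "y \<in> K"
            have uS: "u \<in> ?S" using uU by (simp add: FV_topspace)
            have "compactin euclidean (T u ` K)" using image_compactin[OF K Tcont[OF uS]] .
            then have "bounded (T u ` K)" by (simp add: compact_imp_bounded)
            then have "bdd_above ((\<lambda>y. norm (T u y - (\<lambda>x. 0) y)) ` K)"
              by (intro bdd_of_bounded) (auto simp: image_constant_conv)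
            then have "norm (T u y - 0) \<le> (SUP y\<in>K. norm (T u y - 0))"
              using y by (intro cSUP_upper) auto
            then show "norm (T u y) < \<eta>" using uU \<eta> by simp
          qed
          then show ?thesis using Uo zU tK by auto
        qed
      qed
    qed
    then show ?thesis using A unfolding kR_space_def by blast
  next
    assume A: "(\<forall>f\<in>?S. T f \<in> Cb_space X) \<and> continuous_map ?FT (Cb_topology X) T"
    show ?thesis
    proof (rule key_cont[OF fr lin _ _ _ pc])
      fix f assume "f \<in> ?S"
      then show "continuous_map X euclidean (T f)" using Tcont by blast
    next
      show "topspace X \<subseteq> topspace X" by simp
    next
      fix x assume "x \<in> topspace X"
      then show "bdd_above ((\<lambda>f. norm (T f x - \<phi> f)) ` B)" using bddB[OF _ \<phi> pc] by auto
    next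
      fix \<eta> :: real assume \<eta>: "\<eta> > 0"
      show "\<exists>U. openin ?FT U \<and> (\<lambda>x. 0) \<in> U \<and> (\<forall>u\<in>U. \<forall>y\<in>topspace X. norm (T u y) < \<eta>)"
      proof (cases "topspace X = {}")
        case True
        then show ?thesis using z by (intro exI[of _ ?S]) (auto simp flip: FV_topspace)
      next
        case Xne: False
        let ?B0 = "{h \<in> Cb_space X. (SUP y\<in>topspace X. norm ((h::'a \<Rightarrow> 'k) y - 0)) < \<eta>/2}"
        have zC: "(\<lambda>x. 0::'k) \<in> Cb_space X"
        proof -
          have "(\<lambda>x. 0::'k) ` topspace X = {0}" by (metis Xne image_constant_conv)
          then show ?thesis by (simp add: Cb_space_def C_space_def)
        qed
        have B0o: "openin (Cb_topology X) ?B0"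
          unfolding Cb_topology_def
          apply (rule topology_generated_by_Basis, rule insertI2, rule CollectI)
          apply (rule exI[of _ "\<lambda>x. 0"], rule exI[of _ "\<eta>/2"])
          using zC \<eta> by simp
        let ?U = "{f \<in> topspace ?FT. T f \<in> ?B0}"
        have Uo: "openin ?FT ?U" using openin_continuous_map_preimage A B0o by blast
        have "(SUP y\<in>topspace X. norm (T (\<lambda>x. 0) y - 0)) = (SUP y\<in>topspace X. (0::real))"
          using lin_into_zero[OF lin z] by (intro SUP_cong) auto
        then have "(SUP y\<in>topspace X. norm (T (\<lambda>x. 0) y - 0)) = 0" using Xne by (simp add: cSUP_const)
        then have zU: "(\<lambda>x. 0) \<in> ?U" using z A \<eta> by (simp add: FV_topspace)
        have "\<forall>u\<in>?U. \<forall>y\<in>topspace X. norm (T u y) < \<eta>"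
        proof (intro ballI)
          fix u y assume uU: "u \<in> ?U" and y: "y \<in> topspace X"
          have "bounded (T u ` topspace X)" using uU by (simp add: Cb_space_def)
          then have "bdd_above ((\<lambda>y. norm (T u y - (\<lambda>x. 0) y)) ` topspace X)"
            by (intro bdd_of_bounded) (auto simp: image_constant_conv)
          then have "norm (T u y - 0) \<le> (SUP y\<in>topspace X. norm (T u y - 0))"
            using y by (intro cSUP_upper) auto
          then show "norm (T u y) < \<eta>" using uU \<eta> by simp
        qed
        then show ?thesis using Uo zU by auto
      qed
    qed
  qed
  have P2: "continuous_map X (FV_dual_gamma AP domT Tm \<omega> \<nu>) (\<lambda>x f. T f x)"
    unfolding FV_dual_gamma_def
  proof (rule continuous_on_generated_topo)
    show "(\<lambda>x f. T f x) ` topspace X \<subseteq> \<Union> (insert ?D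
       {{\<psi> \<in> ?D. (SUP f\<in>B. norm (\<psi> f - \<phi> f)) < \<epsilon>} | \<phi> B \<epsilon>.
           \<phi> \<in> ?D \<and> FV_precompact AP domT Tm \<omega> \<nu> B \<and> \<epsilon> > 0})"
      using P1 by auto
  next
    fix U assume "U \<in> insert ?D
       {{\<psi> \<in> ?D. (SUP f\<in>B. norm (\<psi> f - \<phi> f)) < \<epsilon>} | \<phi> B \<epsilon>.
           \<phi> \<in> ?D \<and> FV_precompact AP domT Tm \<omega> \<nu> B \<and> \<epsilon> > 0}"
    then show "openin X ((\<lambda>x f. T f x) -` U \<inter> topspace X)"
    proof
      assume "U = ?D"
      then have "(\<lambda>x f. T f x) -` U \<inter> topspace X = topspace X" using P1 by auto
      then show ?thesis by simp
    next
      assume "U \<in> {{\<psi> \<in> ?D. (SUP f\<in>B. norm (\<psi> f - \<phi> f)) < \<epsilon>} | \<phi> B \<epsilon>.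
           \<phi> \<in> ?D \<and> FV_precompact AP domT Tm \<omega> \<nu> B \<and> \<epsilon> > 0}"
      then obtain \<phi> B \<epsilon> where U: "U = {\<psi> \<in> ?D. (SUP f\<in>B. norm (\<psi> f - \<phi> f)) < \<epsilon>}"
        and \<phi>: "\<phi> \<in> ?D" and pc: "FV_precompact AP domT Tm \<omega> \<nu> B" by blast
      have "(\<lambda>x f. T f x) -` U \<inter> topspace X =
            {x \<in> topspace X. (SUP f\<in>B. norm (T f x - \<phi> f)) \<in> {..<\<epsilon>}}"
        using P1 U by auto
      moreover have "openin X {x \<in> topspace X. (SUP f\<in>B. norm (T f x - \<phi> f)) \<in> {..<\<epsilon>}}"
        by (rule openin_continuous_map_preimage[OF hcont[OF \<phi> pc]]) simp
      ultimately show ?thesis by simp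
    qed
  qed
  show ?thesis using P1 P2 by blast
qed

end
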